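(* Let $G$ be a graph and $e=ab$ an edge of $G$. If $G$ has a minor model of $K_5$ or $K_{2,2,2}$ in which $a$ and $b$ lie in different branch sets, then $G$ has an induced minor model of $K_5$ or $K_{2,2,2}$ in which $a$ and $b$ lie in different branch sets.
   Context: A minor model of $M$ in $G$ is a partition of $V(G)$ into nonempty branch sets $B_x$ ($x\in V(M)$), each inducing a connected subgraph, such that for every $xy\in E(M)$ some edge of $G$ joins $B_x$ and $B_y$. It is an induced minor model if moreover $xy\in E(M)$ if and only if some edge of $G$ joins $B_x$ and $B_y$ (i.e. $M$ is obtained by contractions only). *)

theory Defs
  imports Main
begin

definition graph :: "'a set \<Rightarrow> ('a \<Rightarrow> 'a \<Rightarrow> bool) \<Rightarrow> bool" where
  "graph V E \<longleftrightarrow> finite V \<and> (\<forall>x y. E x y \<longrightarrow> x \<in> V \<and> y \<in> V)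
     \<and> (\<forall>x y. E x y \<longrightarrow> E y x) \<and> (\<forall>x. \<not> E x x)"

definition connected_set :: "('a \<Rightarrow> 'a \<Rightarrow> bool) \<Rightarrow> 'a set \<Rightarrow> bool" where
  "connected_set E S \<longleftrightarrow> S \<noteq> {} \<and>
     (\<forall>x\<in>S. \<forall>y\<in>S. (\<lambda>u v. E u v \<and> u \<in> S \<and> v \<in> S)\<^sup>*\<^sup>* x y)"

definition joined :: "('a \<Rightarrow> 'a \<Rightarrow> bool) \<Rightarrow> 'a set \<Rightarrow> 'a set \<Rightarrow> bool" where
  "joined E A B \<longleftrightarrow> (\<exists>u\<in>A. \<exists>v\<in>B. E u v)"

definition minor_model ::
  "'a set \<Rightarrow> ('a \<Rightarrow> 'a \<Rightarrow> bool) \<Rightarrow> 'b set \<Rightarrow> ('b \<Rightarrow> 'b \<Rightarrow> bool) \<Rightarrow> ('b \<Rightarrow> 'a set) \<Rightarrow> bool" where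
  "minor_model V E VM EM B \<longleftrightarrow>
     (\<forall>x\<in>VM. B x \<subseteq> V \<and> connected_set E (B x)) \<and>
     (\<forall>x\<in>VM. \<forall>y\<in>VM. x \<noteq> y \<longrightarrow> B x \<inter> B y = {}) \<and>
     (\<Union>x\<in>VM. B x) = V \<and>
     (\<forall>x\<in>VM. \<forall>y\<in>VM. EM x y \<longrightarrow> joined E (B x) (B y))"

definition induced_minor_model ::
  "'a set \<Rightarrow> ('a \<Rightarrow> 'a \<Rightarrow> bool) \<Rightarrow> 'b set \<Rightarrow> ('b \<Rightarrow> 'b \<Rightarrow> bool) \<Rightarrow> ('b \<Rightarrow> 'a set) \<Rightarrow> bool" where
  "induced_minor_model V E VM EM B \<longleftrightarrow> minor_model V E VM EM B \<and>
     (\<forall>x\<in>VM. \<forall>y\<in>VM. x \<noteq> y \<longrightarrow> joined E (B x) (B y) \<longrightarrow> EM x y)"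

definition separates :: "'b set \<Rightarrow> ('b \<Rightarrow> 'a set) \<Rightarrow> 'a \<Rightarrow> 'a \<Rightarrow> bool" where
  "separates VM B a b \<longleftrightarrow> (\<exists>x\<in>VM. \<exists>y\<in>VM. x \<noteq> y \<and> a \<in> B x \<and> b \<in> B y)"

text \<open>K5 on vertices {0..4}; K_{2,2,2} on {0..5} with parts {0,1},{2,3},{4,5}.\<close>
definition K5_V :: "nat set" where "K5_V = {0..<5}"
definition K5_E :: "nat \<Rightarrow> nat \<Rightarrow> bool" where
  "K5_E i j \<longleftrightarrow> i \<in> K5_V \<and> j \<in> K5_V \<and> i \<noteq> j"
definition K222_V :: "nat set" where "K222_V = {0..<6}"
definition K222_E :: "nat \<Rightarrow> nat \<Rightarrow> bool" where
  "K222_E i j \<longleftrightarrow> i \<in> K222_V \<and> j \<in> K222_V \<and> i div 2 \<noteq> j div 2"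

end

theory Submission
  imports Defs
begin

lemma rmono:
  assumes "(\<lambda>u v. E u v \<and> u \<in> S \<and> v \<in> S)\<^sup>*\<^sup>* x y" "S \<subseteq> T"
  shows "(\<lambda>u v. E u v \<and> u \<in> T \<and> v \<in> T)\<^sup>*\<^sup>* x y"
  using assms(1)
proof (induction rule: rtranclp_induct)
  case base then show ?case by simp
next
  case (step y z) then show ?case using assms(2)
    by (metis (mono_tags, lifting) in_mono rtranclp.rtrancl_into_rtrancl)
qed

lemma conn_union:
  assumes g: "graph V E" and cS: "connected_set E S" and cT: "connected_set E T"
    and j: "joined E S T"
  shows "connected_set E (S \<union> T)"
proof -
  let ?R = "\<lambda>u v. E u v \<and> u \<in> S \<union> T \<and> v \<in> S \<union> T"
  obtain u v where uv: "u \<in> S" "v \<in> T" "E u v" using j unfolding joined_def by blast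
  have vu: "E v u" using g uv(3) unfolding graph_def by blast
  have S: "?R\<^sup>*\<^sup>* x y" if "x \<in> S" "y \<in> S" for x y
    proof (rule rmono[of E S])
    show "(\<lambda>u v. E u v \<and> u \<in> S \<and> v \<in> S)\<^sup>*\<^sup>* x y" using cS that unfolding connected_set_def by blast
  qed auto
  have T: "?R\<^sup>*\<^sup>* x y" if "x \<in> T" "y \<in> T" for x y
    proof (rule rmono[of E T])
    show "(\<lambda>u v. E u v \<and> u \<in> T \<and> v \<in> T)\<^sup>*\<^sup>* x y" using cT that unfolding connected_set_def by blast
  qed auto
  have e1: "?R\<^sup>*\<^sup>* u v" using uv by (intro r_into_rtranclp) auto
  have e2: "?R\<^sup>*\<^sup>* v u" using uv vu by (intro r_into_rtranclp) auto
  show ?thesis unfolding connected_set_def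
  proof (intro conjI ballI)
    show "S \<union> T \<noteq> {}" using uv by auto
  next
    fix x y assume "x \<in> S \<union> T" "y \<in> S \<union> T"
    then consider "x \<in> S" "y \<in> S" | "x \<in> S" "y \<in> T" | "x \<in> T" "y \<in> S" | "x \<in> T" "y \<in> T" by blast
    then show "?R\<^sup>*\<^sup>* x y"
    proof cases
      case 1 then show ?thesis using S by blast
    next
      case 2 then show ?thesis using rtranclp_trans[OF rtranclp_trans[OF S[of x u] e1] T[of v y]] uv by blast
    next
      case 3 then show ?thesis using rtranclp_trans[OF rtranclp_trans[OF T[of x v] e2] S[of u y]] uv by blast
    next
      case 4 then show ?thesis using T by blast
    qed
  qed
qed

lemma joined_sym: "graph V E \<Longrightarrow> joined E A B \<Longrightarrow> joined E B A"
  unfolding joined_def graph_def by blast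

lemma K5_V_eq: "K5_V = {0,1,2,3,4}" by (auto simp: K5_V_def)
lemma K222_V_eq: "K222_V = {0,1,2,3,4,5}" by (auto simp: K222_V_def)

lemma joined_Un1: "joined E X A \<Longrightarrow> joined E X (A \<union> B)" unfolding joined_def by blast
lemma joined_Un2: "joined E X B \<Longrightarrow> joined E X (A \<union> B)" unfolding joined_def by blast
lemma joined_Un1': "joined E A X \<Longrightarrow> joined E (A \<union> B) X" unfolding joined_def by blast
lemma joined_Un2': "joined E B X \<Longrightarrow> joined E (A \<union> B) X" unfolding joined_def by blast

lemma k5_from_merge:
  assumes g: "graph V E" and mm: "minor_model V E K222_V K222_E B"
    and U: "{p,q,r,s,t,u} = K222_V" and dist: "distinct [p,q,r,s,t,u]"
    and J: "joined E (B p) (B q)"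
    and K: "K222_E p r" "K222_E p s" "K222_E p t" "K222_E q r" "K222_E q s" "K222_E q t"
       "K222_E r s" "K222_E t u" "K222_E r u" "K222_E s t"
    and sep: "a \<in> B i" "b \<in> B j" "i \<in> K222_V" "j \<in> K222_V" "i \<noteq> j"
       "\<not> (i \<in> {t,u} \<and> j \<in> {t,u})"
  shows "\<exists>C. induced_minor_model V E K5_V K5_E C \<and> separates K5_V C a b"
proof -
  define C where "C = (\<lambda>x::nat. if x = 0 then B p else if x = 1 then B q else if x = 2 then B r
     else if x = 3 then B s else B t \<union> B u)"
  have inV: "p \<in> K222_V" "q \<in> K222_V" "r \<in> K222_V" "s \<in> K222_V" "t \<in> K222_V" "u \<in> K222_V"
    using U by auto
  have Bsub: "\<And>x. x \<in> K222_V \<Longrightarrow> B x \<subseteq> V \<and> connected_set E (B x)"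
    and Bdisj: "\<And>x y. x \<in> K222_V \<Longrightarrow> y \<in> K222_V \<Longrightarrow> x \<noteq> y \<Longrightarrow> B x \<inter> B y = {}"
    and Bun: "(\<Union>x\<in>K222_V. B x) = V"
    and Bj: "\<And>x y. x \<in> K222_V \<Longrightarrow> y \<in> K222_V \<Longrightarrow> K222_E x y \<Longrightarrow> joined E (B x) (B y)"
    using mm unfolding minor_model_def by blast+
  have jj: "\<And>x y. K222_E x y \<Longrightarrow> joined E (B x) (B y)"
    using Bj unfolding K222_E_def by blast
  have jjs: "\<And>x y. K222_E x y \<Longrightarrow> joined E (B y) (B x)"
    using jj joined_sym[OF g] by blast
  note JK = jj[OF K(1)] jj[OF K(2)] jj[OF K(3)] jj[OF K(4)] jj[OF K(5)] jj[OF K(6)]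
     jj[OF K(7)] jj[OF K(8)] jj[OF K(9)] jj[OF K(10)]
     jjs[OF K(1)] jjs[OF K(2)] jjs[OF K(3)] jjs[OF K(4)] jjs[OF K(5)] jjs[OF K(6)]
     jjs[OF K(7)] jjs[OF K(8)] jjs[OF K(9)] jjs[OF K(10)] J joined_sym[OF g J]
  have conn4: "connected_set E (B t \<union> B u)"
    using conn_union[OF g] Bsub inV JK by blast
  have C1: "\<forall>x\<in>K5_V. C x \<subseteq> V \<and> connected_set E (C x)"
    unfolding K5_V_eq C_def using Bsub inV conn4 by auto
  have C2: "\<forall>x\<in>K5_V. \<forall>y\<in>K5_V. x \<noteq> y \<longrightarrow> C x \<inter> C y = {}"
  proof -
    have "\<And>x y. x \<in> {p,q,r,s,t,u} \<Longrightarrow> y \<in> {p,q,r,s,t,u} \<Longrightarrow> x \<noteq> y \<Longrightarrow> B x \<inter> B y = {}"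
      using Bdisj U by blast
    then show ?thesis unfolding K5_V_eq C_def using dist by auto
  qed
  have C3: "(\<Union>x\<in>K5_V. C x) = V"
    unfolding K5_V_eq C_def using Bun U[symmetric] by auto
  have C4: "\<forall>x\<in>K5_V. \<forall>y\<in>K5_V. K5_E x y \<longrightarrow> joined E (C x) (C y)"
    unfolding K5_V_eq C_def K5_E_def
    by (auto intro: JK joined_Un1 joined_Un2 joined_Un1' joined_Un2')
  have ind: "induced_minor_model V E K5_V K5_E C"
    unfolding induced_minor_model_def minor_model_def using C1 C2 C3 C4
    by (auto simp: K5_E_def)
  define idx where "idx = (\<lambda>x. if x = p then 0 else if x = q then 1 else if x = r then 2
     else if x = s then 3 else (4::nat))"
  have loc: "\<And>x. x \<in> K222_V \<Longrightarrow> idx x \<in> K5_V \<and> B x \<subseteq> C (idx x)"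
  proof -
    fix x assume "x \<in> K222_V"
    then have "x \<in> {p,q,r,s,t,u}" using U by simp
    then show "idx x \<in> K5_V \<and> B x \<subseteq> C (idx x)"
      unfolding K5_V_eq C_def idx_def using dist by auto
  qed
  have ij: "i \<in> {p,q,r,s,t,u}" "j \<in> {p,q,r,s,t,u}" using U sep by auto
  have "idx i \<noteq> idx j" using ij sep(5,6) dist unfolding idx_def by auto
  then have "separates K5_V C a b" unfolding separates_def using loc sep by blast
  then show ?thesis using ind by blast
qed

lemma k5_case:
  fixes p q t1 u1 r1 s1 t2 u2 r2 s2 i j :: nat
  assumes g: "graph V E" and mm: "minor_model V E K222_V K222_E B"
    and sep: "a \<in> B i" "b \<in> B j" "i \<in> K222_V" "j \<in> K222_V" "i \<noteq> j"
    and J: "joined E (B p) (B q)"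
    and ch: "(p = 0 \<and> q = 1 \<and> t1 = 2 \<and> u1 = 4 \<and> r1 = 3 \<and> s1 = 5 \<and> t2 = 3 \<and> u2 = 5 \<and> r2 = 2 \<and> s2 = 4) \<or>
      (p = 2 \<and> q = 3 \<and> t1 = 0 \<and> u1 = 4 \<and> r1 = 1 \<and> s1 = 5 \<and> t2 = 1 \<and> u2 = 5 \<and> r2 = 0 \<and> s2 = 4) \<or>
      (p = 4 \<and> q = 5 \<and> t1 = 0 \<and> u1 = 2 \<and> r1 = 1 \<and> s1 = 3 \<and> t2 = 1 \<and> u2 = 3 \<and> r2 = 0 \<and> s2 = 2)"
  shows "\<exists>C. induced_minor_model V E K5_V K5_E C \<and> separates K5_V C a b"
proof (cases "i \<in> {t1,u1} \<and> j \<in> {t1,u1}")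
  case False
  show ?thesis
    by (rule k5_from_merge[OF g mm _ _ J _ _ _ _ _ _ _ _ _ _ sep False, of r1 s1])
      (use ch in \<open>auto simp: K222_E_def K222_V_def\<close>)
next
  case True
  have nt: "\<not> (i \<in> {t2,u2} \<and> j \<in> {t2,u2})" using True ch sep(5) by auto
  show ?thesis
    by (rule k5_from_merge[OF g mm _ _ J _ _ _ _ _ _ _ _ _ _ sep nt, of r2 s2])
      (use ch in \<open>auto simp: K222_E_def K222_V_def\<close>)
qed

theorem mainTheorem16:
  fixes V :: "'a set" and E :: "'a \<Rightarrow> 'a \<Rightarrow> bool" and a b :: 'a
  assumes "graph V E" and "E a b"
    and "(\<exists>B. minor_model V E K5_V K5_E B \<and> separates K5_V B a b) \<or>
         (\<exists>B. minor_model V E K222_V K222_E B \<and> separates K222_V B a b)"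
  shows "(\<exists>B. induced_minor_model V E K5_V K5_E B \<and> separates K5_V B a b) \<or>
         (\<exists>B. induced_minor_model V E K222_V K222_E B \<and> separates K222_V B a b)"
  using assms(3)
proof
  assume "\<exists>B. minor_model V E K5_V K5_E B \<and> separates K5_V B a b"
  then obtain B where "minor_model V E K5_V K5_E B" "separates K5_V B a b" by blast
  then have "induced_minor_model V E K5_V K5_E B \<and> separates K5_V B a b"
    unfolding induced_minor_model_def by (auto simp: K5_E_def)
  then show ?thesis by blast
next
  assume "\<exists>B. minor_model V E K222_V K222_E B \<and> separates K222_V B a b"
  then obtain B where mm: "minor_model V E K222_V K222_E B" and sp: "separates K222_V B a b" by blast
  show ?thesis
  proof (cases "induced_minor_model V E K222_V K222_E B")
    case True then show ?thesis using sp by blast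
  next
    case False
    then obtain x y where xy: "x \<in> K222_V" "y \<in> K222_V" "x \<noteq> y" "joined E (B x) (B y)" "\<not> K222_E x y"
      using mm unfolding induced_minor_model_def by blast
    have "x div 2 = y div 2" using xy unfolding K222_E_def by blast
    then have "(x = 0 \<and> y = 1) \<or> (x = 1 \<and> y = 0) \<or> (x = 2 \<and> y = 3) \<or> (x = 3 \<and> y = 2) \<or>
       (x = 4 \<and> y = 5) \<or> (x = 5 \<and> y = 4)" using xy(1,2,3) unfolding K222_V_eq by auto
    then have J: "joined E (B 0) (B 1) \<or> joined E (B 2) (B 3) \<or> joined E (B 4) (B 5)"
      using xy(4) joined_sym[OF assms(1)] by auto
    obtain i j where sep: "i \<in> K222_V" "j \<in> K222_V" "i \<noteq> j" "a \<in> B i" "b \<in> B j"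
      using sp unfolding separates_def by blast
    from J have "\<exists>C. induced_minor_model V E K5_V K5_E C \<and> separates K5_V C a b"
    proof (elim disjE)
      assume "joined E (B 0) (B 1)"
      then show ?thesis
        by (rule k5_case[OF assms(1) mm sep(4,5,1,2,3), of 0 1 2 4 3 5 3 5 2 4]) simp
    next
      assume "joined E (B 2) (B 3)"
      then show ?thesis
        by (rule k5_case[OF assms(1) mm sep(4,5,1,2,3), of 2 3 0 4 1 5 1 5 0 4]) simp
    next
      assume "joined E (B 4) (B 5)"
      then show ?thesis
        by (rule k5_case[OF assms(1) mm sep(4,5,1,2,3), of 4 5 0 2 1 3 1 3 0 2]) simp
    qed
    then show ?thesis by blast
  qed
qed

end
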